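(* Let $\mathcal X=\{1,\dots,N\}$ with $N\ge2$, let $0<\alpha<1$ and $0\le\varepsilon\le1-\frac1N$. Let $p,q$ be probability distributions on $\mathcal X$ with $p(x)>0$ for all $x$, let $u$ be the uniform distribution on $\mathcal X$, let $y\in\mathcal X$, and let $p'=U_{\alpha,\varepsilon}(p,y)$. Then \[ \log\frac1{p(y)}-\log\frac1{q(y)}\le \frac1{\log\frac1\alpha}\Big[D(q\parallel p)-D(q\parallel p')+\log\frac1{1-\varepsilon}\Big]+N\Big[D(u\parallel p)-D(u\parallel p')+\log\frac1{(1-\varepsilon)\alpha}\Big]. \]
   Context: All logarithms are natural, with $\log\frac10=+\infty$. For a distribution $p$ on $\mathcal X$, a letter $y$, $0<\alpha<1$ and $0\le\varepsilon\le1-\frac1N$, the update $U_{\alpha,\varepsilon}(p,y)$ is the distribution $p'$ with $p'(x)=\alpha p(x)+(1-\alpha)(1-\varepsilon)$ if $x=y$ and $p'(x)=\alpha p(x)+(1-\alpha)\frac{\varepsilon}{N-1}$ if $x\neq y$. For distributions $q,r$ with $r(x)>0$ for all $x$, $D(q\parallel r)=\sum_{x:\,q(x)>0}q(x)\log\frac{q(x)}{r(x)}$. *)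

theory Defs
  imports Complex_Main "HOL-Library.Extended_Real"
begin

text \<open>Alphabet X = {1..N}; distributions are functions nat => real, only values on {1..N} matter.\<close>

definition is_dist :: "nat \<Rightarrow> (nat \<Rightarrow> real) \<Rightarrow> bool" where
  "is_dist N p \<longleftrightarrow> (\<forall>x\<in>{1..N}. 0 \<le> p x) \<and> (\<Sum>x\<in>{1..N}. p x) = 1"

definition uniform_dist :: "nat \<Rightarrow> nat \<Rightarrow> real" where
  "uniform_dist N = (\<lambda>x. 1 / real N)"

definition upd :: "nat \<Rightarrow> real \<Rightarrow> real \<Rightarrow> (nat \<Rightarrow> real) \<Rightarrow> nat \<Rightarrow> nat \<Rightarrow> real" where
  "upd N \<alpha> \<epsilon> p y = (\<lambda>x. if x = y then \<alpha> * p x + (1 - \<alpha>) * (1 - \<epsilon>)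
                          else \<alpha> * p x + (1 - \<alpha>) * (\<epsilon> / (real N - 1)))"

definition KL :: "nat \<Rightarrow> (nat \<Rightarrow> real) \<Rightarrow> (nat \<Rightarrow> real) \<Rightarrow> real" where
  "KL N q r = (\<Sum>x\<in>{x\<in>{1..N}. 0 < q x}. q x * ln (q x / r x))"

definition log_inv :: "real \<Rightarrow> ereal" where
  "log_inv t = (if t = 0 then \<infinity> else ereal (ln (1 / t)))"

end

theory Submission
  imports Defs
begin

lemma core:
  fixes a c p q n A L :: real
  assumes a: "0<a" "a<1" and c: "0<c" "c\<le>1" and p: "0<p" "p\<le>1" and q: "0<q" "q\<le>1"
    and n: "1\<le>n" and A: "A = a + (1-a)*(c/p)" and L: "L = ln (1/a)"
  shows "ln q - ln p \<le> (q*ln A - (1-q)*L - ln c)/L + ln A + L - n * ln c"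
proof -
  have L0: "L > 0" using L a by simp
  have lc: "ln c \<le> 0" using c by simp
  have nlc: "n * ln c \<le> ln c" using mult_right_mono_neg[OF n lc] by simp
  have cl: "- ln c / L \<ge> 0" using lc L0 by (simp add: divide_nonpos_pos)
  have Apos: "A > 0" using A a c p by (simp add: add_pos_nonneg)
  show ?thesis
  proof (cases "ln A \<ge> 0")
    case True
    define t where "t = c/p"
    have t0: "t > 0" using t_def c p by simp
    define lam where "lam = 1 + ln A / L"
    have lam1: "lam \<ge> 1" using True L0 lam_def by simp
    have A1: "A \<ge> 1" using True Apos by (simp add: ln_ge_zero_iff)
    have Lle: "L \<le> (1-a)/a" using L a ln_le_minus_one[of "1/a"] by (simp add: field_simps)
    have AlnA: "A * ln A \<ge> A - 1" using ln_le_minus_one[of "1/A"] Apos by (simp add: ln_div field_simps)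
    have Am1: "A - 1 = (1-a)*(t-1)" using A t_def by (simp add: algebra_simps)
    have "(A - 1)/L \<ge> (A-1) / ((1-a)/a)" using A1 L0 Lle a by (intro divide_left_mono) auto
    also have "(A-1) / ((1-a)/a) = a*(t-1)" unfolding Am1 using a by (simp add: field_simps)
    finally have k1: "a*(t-1) \<le> (A-1)/L" .
    have "(A-1)/L \<le> A*ln A/L" using AlnA L0 by (simp add: divide_right_mono)
    hence k1': "(A-1)/L \<le> A*ln A/L" .
    have e: "lam*A = A + A*ln A/L" using lam_def L0 by (simp add: field_simps)
    have "t*a = a*(t-1) + a" by algebra
    hence key: "t * a \<le> lam * A" using k1 k1' e A1 a by linarith
    hence "ln (t*a) \<le> ln (lam*A)" using t0 a Apos lam1 by simp
    moreover have "ln (t*a) = ln c - ln p - L" using c p a L t_def by (simp add: ln_mult ln_div)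
    moreover have "ln (lam*A) = ln lam + ln A" using lam1 Apos by (simp add: ln_mult)
    ultimately have k2: "ln c - ln p - L \<le> ln lam + ln A" by linarith
    have "ln (lam*q) \<le> lam*q - 1" using lam1 q by (intro ln_le_minus_one) simp
    moreover have "ln (lam*q) = ln lam + ln q" using lam1 q by (simp add: ln_mult)
    ultimately have k3: "ln q \<le> lam*q - 1 - ln lam" by linarith
    have e1: "(q*ln A - (1-q)*L - ln c)/L = q*(ln A/L) - (1-q) - ln c / L" using L0 by (simp add: field_simps)
    have e2: "lam*q = q + q*(ln A/L)" using lam_def by (simp add: algebra_simps)
    show ?thesis using k2 k3 nlc cl e1 e2 by linarith
  next
    case False
    have A1: "A < 1" using False Apos by (meson linorder_not_le ln_ge_zero)
    have cp: "c < p"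
    proof (rule ccontr)
      assume "\<not> c < p" hence "c/p \<ge> 1" using p by simp
      hence "A \<ge> 1" using A a by (smt (verit) mult_le_cancel_left1)
      thus False using A1 by simp
    qed
    have Ap: "A*p \<ge> c" using A p a cp by (simp add: field_simps) (smt (verit) mult_left_mono)
    have "ln (a/(A*p)) \<le> ln (a/c)" using Ap a c Apos p by (intro ln_mono) (auto intro: divide_left_mono)
    hence k1: "ln a - ln A - ln p \<le> ln a - ln c" using a c Apos p by (simp add: ln_div ln_mult)
    have la: "ln a = - L" using L a by (simp add: ln_div)
    have cpc: "c/p \<ge> c" using c p by (simp add: le_divide_eq mult_left_le)
    have "(1-a)*(c/p) \<ge> (1-a)*c" using cpc a by (intro mult_left_mono) auto
    moreover have "a*c \<le> a" using a c by (simp add: mult_left_le)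
    ultimately have Ac: "A \<ge> c" using A by (simp add: algebra_simps)
    have "ln A \<ge> ln c" using Ac c by simp
    hence g1: "(ln A - ln c)/L \<ge> 0" using L0 by simp
    have g2: "q*ln A \<ge> ln A" using False q by (smt (verit) mult_le_cancel_right1)
    have "ln q \<le> q - 1" using q by (intro ln_le_minus_one) simp
    have "(q*ln A - (1-q)*L - ln c)/L \<ge> (ln A - ln c)/L - (1-q)"
      using L0 g2 by (simp add: field_simps)
    then show ?thesis using k1 la g1 nlc \<open>ln q \<le> q - 1\<close> L0 by linarith
  qed
qed

lemma lemma2_main:
  fixes N :: nat and \<alpha> \<epsilon> :: real and p q :: "nat \<Rightarrow> real" and y :: nat
  assumes N2: "N \<ge> 2"
    and a0: "0 < \<alpha>" and a1: "\<alpha> < 1"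
    and e0: "0 \<le> \<epsilon>" and e1: "\<epsilon> \<le> 1 - 1 / real N"
    and dp: "is_dist N p" and dq: "is_dist N q"
    and pp: "\<forall>x\<in>{1..N}. 0 < p x"
    and y: "y \<in> {1..N}"
    and qy: "0 < q y"
  shows "ln (1 / p y) - ln (1 / q y) \<le>
    ((1 / ln (1 / \<alpha>)) * (KL N q p - KL N q (upd N \<alpha> \<epsilon> p y) + ln (1 / (1 - \<epsilon>)))
      + real N * (KL N (uniform_dist N) p - KL N (uniform_dist N) (upd N \<alpha> \<epsilon> p y)
                  + ln (1 / ((1 - \<epsilon>) * \<alpha>))))"
proof -
  define p' where "p' = upd N \<alpha> \<epsilon> p y"
  define c where "c = 1 - \<epsilon>"
  define A where "A = \<alpha> + (1-\<alpha>)*(c/p y)"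
  define L where "L = ln (1/\<alpha>)"
  define S where "S = {x\<in>{1..N}. 0 < q x}"
  have Npos: "real N \<ge> 2" using N2 by simp
  have invN: "1 / real N > 0" using Npos by simp
  have c0: "c > 0" using e1 invN c_def by linarith
  have c1: "c \<le> 1" using e0 c_def by simp
  have pn: "\<And>x. x \<in> {1..N} \<Longrightarrow> 0 \<le> p x" using dp unfolding is_dist_def by blast
  have qn: "\<And>x. x \<in> {1..N} \<Longrightarrow> 0 \<le> q x" using dq unfolding is_dist_def by blast
  have ps: "(\<Sum>x\<in>{1..N}. p x) = 1" using dp unfolding is_dist_def by blast
  have qs: "(\<Sum>x\<in>{1..N}. q x) = 1" using dq unfolding is_dist_def by blast
  have py1: "p y \<le> 1" using member_le_sum[of y "{1..N}" p] pn y ps by auto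
  have qy1: "q y \<le> 1" using member_le_sum[of y "{1..N}" q] qn y qs by auto
  have py0: "p y > 0" using pp y by blast
  have p'ge: "\<And>x. x \<in> {1..N} \<Longrightarrow> p' x / p x \<ge> \<alpha>"
  proof -
    fix x assume x: "x \<in> {1..N}"
    have px: "p x > 0" using pp x by blast
    have "p' x \<ge> \<alpha> * p x"
      using a1 c0 c_def e0 Npos unfolding p'_def upd_def by (auto intro!: mult_nonneg_nonneg divide_nonneg_pos)
    thus "p' x / p x \<ge> \<alpha>" using px by (simp add: le_divide_eq)
  qed
  have p'pos: "\<And>x. x \<in> {1..N} \<Longrightarrow> p' x > 0"
  proof -
    fix x assume x: "x \<in> {1..N}"
    have "p' x / p x > 0" using p'ge[OF x] a0 by linarith
    moreover have "p x > 0" using pp x by blast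
    ultimately show "p' x > 0" by (simp add: zero_less_divide_iff)
  qed
  have Ay: "p' y / p y = A" unfolding p'_def upd_def A_def c_def using py0 by (simp add: field_simps)
  have lnratio: "\<And>x. x \<in> {1..N} \<Longrightarrow> r > 0 \<Longrightarrow> r * ln (r / p x) - r * ln (r / p' x) = r * ln (p' x / p x)" for r
  proof -
    fix x assume x: "x \<in> {1..N}" and r: "r > 0"
    have "p x > 0" "p' x > 0" using pp x p'pos[OF x] by auto
    thus "r * ln (r / p x) - r * ln (r / p' x) = r * ln (p' x / p x)" using r
      by (simp add: ln_div algebra_simps)
  qed
  have Sfin: "finite S" and Ssub: "S \<subseteq> {1..N}" and yS: "y \<in> S" using y qy S_def by auto
  have sumS: "(\<Sum>x\<in>S. q x) = 1"
  proof -
    have "(\<Sum>x\<in>S. q x) = (\<Sum>x\<in>{1..N}. if 0 < q x then q x else 0)"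
      unfolding S_def by (rule sum.inter_filter) simp
    also have "\<dots> = (\<Sum>x\<in>{1..N}. q x)" using qn by (intro sum.cong) (auto simp: order_le_less)
    finally show ?thesis using qs by simp
  qed
  have KLq: "KL N q p - KL N q p' = (\<Sum>x\<in>S. q x * ln (p' x / p x))"
    unfolding KL_def S_def[symmetric] sum_subtractf[symmetric]
    using Ssub by (intro sum.cong) (auto simp: S_def intro!: lnratio)
  have "(\<Sum>x\<in>S. q x * ln (p' x / p x)) \<ge> (\<Sum>x\<in>S. q x * ln \<alpha> + (if x = y then q x * (ln A - ln \<alpha>) else 0))"
  proof (rule sum_mono)
    fix x assume xS: "x \<in> S"
    hence x: "x \<in> {1..N}" and qx: "q x > 0" using S_def by auto
    show "q x * ln \<alpha> + (if x = y then q x * (ln A - ln \<alpha>) else 0) \<le> q x * ln (p' x / p x)"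
    proof (cases "x = y")
      case True thus ?thesis using Ay by (simp add: algebra_simps)
    next
      case False
      have "ln \<alpha> \<le> ln (p' x / p x)" using p'ge[OF x] a0 by simp
      thus ?thesis using False qx by simp
    qed
  qed
  also have "(\<Sum>x\<in>S. q x * ln \<alpha> + (if x = y then q x * (ln A - ln \<alpha>) else 0)) = ln \<alpha> + q y * (ln A - ln \<alpha>)"
    using Sfin yS sumS by (simp add: sum.distrib sum_distrib_right[symmetric])
  finally have Kq: "KL N q p - KL N q p' \<ge> q y * ln A + (1 - q y) * ln \<alpha>"
    using KLq by (simp add: algebra_simps)
  define u where "u = uniform_dist N"
  have u: "\<And>x. u x = 1 / real N" unfolding u_def uniform_dist_def by simp
  have Su: "{x\<in>{1..N}. 0 < u x} = {1..N}" using u invN by auto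
  have KLu: "KL N u p - KL N u p' = (\<Sum>x\<in>{1..N}. u x * ln (p' x / p x))"
    unfolding KL_def Su sum_subtractf[symmetric]
    by (intro sum.cong refl lnratio) (auto simp: u)
  have "(\<Sum>x\<in>{1..N}. u x * ln (p' x / p x)) \<ge> (\<Sum>x\<in>{1..N}. u x * ln \<alpha> + (if x = y then u x * (ln A - ln \<alpha>) else 0))"
  proof (rule sum_mono)
    fix x assume x: "x \<in> {1..N}"
    show "u x * ln \<alpha> + (if x = y then u x * (ln A - ln \<alpha>) else 0) \<le> u x * ln (p' x / p x)"
    proof (cases "x = y")
      case True thus ?thesis using Ay by (simp add: algebra_simps)
    next
      case False
      have "ln \<alpha> \<le> ln (p' x / p x)" using p'ge[OF x] a0 by simp
      thus ?thesis using False invN u by (simp add: divide_right_mono)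
    qed
  qed
  also have "(\<Sum>x\<in>{1..N}. u x * ln \<alpha> + (if x = y then u x * (ln A - ln \<alpha>) else 0)) = ln \<alpha> + (1/real N) * (ln A - ln \<alpha>)"
    using y Npos by (simp add: sum.distrib u)
  finally have Ku: "KL N u p - KL N u p' \<ge> ln \<alpha> + (1/real N) * (ln A - ln \<alpha>)"
    using KLu by simp
  have L0: "L > 0" using a0 a1 L_def by simp
  have la: "ln \<alpha> = - L" using a0 L_def by (simp add: ln_div)
  have cr: "ln (q y) - ln (p y) \<le> (q y*ln A - (1-q y)*L - ln c)/L + ln A + L - real N * ln c"
    by (rule core[OF a0 a1 c0 c1 py0 py1 qy qy1 _ A_def L_def]) (use Npos in simp)
  have "(q y*ln A - (1-q y)*L - ln c)/L \<le> (1/L) * (KL N q p - KL N q p' + ln (1/c))"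
    using Kq la L0 c0 by (simp add: ln_div divide_right_mono)
  moreover have "ln A + L - real N * ln c \<le> real N * (KL N u p - KL N u p' + ln (1/(c*\<alpha>)))"
  proof -
    have "real N * (ln \<alpha> + (1/real N) * (ln A - ln \<alpha>) + ln (1/(c*\<alpha>))) \<le> real N * (KL N u p - KL N u p' + ln (1/(c*\<alpha>)))"
      using Ku Npos by (intro mult_left_mono) auto
    moreover have "real N * (ln \<alpha> + (1/real N) * (ln A - ln \<alpha>) + ln (1/(c*\<alpha>))) = ln A + L - real N * ln c"
      using Npos c0 a0 la by (simp add: ln_div ln_mult field_simps)
    ultimately show ?thesis by simp
  qed
  moreover have "ln (1 / p y) - ln (1 / q y) = ln (q y) - ln (p y)" using py0 qy by (simp add: ln_div)
  ultimately show ?thesis using cr unfolding p'_def[symmetric] u_def[symmetric] c_def[symmetric] L_def[symmetric]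
    by linarith
qed

theorem lemma2:
  fixes N :: nat and \<alpha> \<epsilon> :: real and p q :: "nat \<Rightarrow> real" and y :: nat
  assumes "N \<ge> 2"
    and "0 < \<alpha>" and "\<alpha> < 1"
    and "0 \<le> \<epsilon>" and "\<epsilon> \<le> 1 - 1 / real N"
    and "is_dist N p" and "is_dist N q"
    and "\<forall>x\<in>{1..N}. 0 < p x"
    and "y \<in> {1..N}"
  shows "log_inv (p y) - log_inv (q y) \<le>
    ereal ((1 / ln (1 / \<alpha>)) * (KL N q p - KL N q (upd N \<alpha> \<epsilon> p y) + ln (1 / (1 - \<epsilon>)))
      + real N * (KL N (uniform_dist N) p - KL N (uniform_dist N) (upd N \<alpha> \<epsilon> p y)
                  + ln (1 / ((1 - \<epsilon>) * \<alpha>))))"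
proof -
  have py: "p y > 0" using assms by blast
  have qn: "q y \<ge> 0" using assms unfolding is_dist_def by blast
  show ?thesis
  proof (cases "q y = 0")
    case True thus ?thesis using py by (simp add: log_inv_def)
  next
    case False
    hence "q y > 0" using qn by simp
    from lemma2_main[OF assms this] show ?thesis using py False by (simp add: log_inv_def)
  qed
qed

end
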